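(* Let $\Omega$ be an infinite set, let $1\leq k<i\leq j$ be integers, and let $\Gamma=\Gamma^\Omega_{i,j;\geq k}$. Then for every positive integer $\ell$, every $\ell$-flower of $\Gamma$ is either a $j$-regular star, in which case $\ell=i-k$, or an $i$-regular star, in which case $\ell=j-k$; and both occur (every $j$-regular star is an $(i-k)$-flower and every $i$-regular star is a $(j-k)$-flower). Moreover, $\Gamma$ contains no $\ell$-star for any positive integer $\ell$.
   Context: $\Gamma^\Omega_{i,j;\geq k}$ is the bipartite graph with biparts the $i$-subsets and the $j$-subsets of $\Omega$ (two copies if $i=j$), an $i$-subset adjacent to a $j$-subset iff their intersection has at least $k$ elements. Let $\ell$ be a positive integer and let $\mathcal{A}$ be an infinite set of vertices in one bipart. $\mathcal{A}$ is an $\ell$-star if: (S1) every vertex $v$ of the other bipart is adjacent to exactly $\ell+1$ members of $\mathcal{A}$, or non-adjacent to exactly $\ell$ members of $\mathcal{A}$, or adjacent to no member of $\mathcal{A}$; (S2) for every $(\ell+1)$-subset $A\subset\mathcal{A}$ the number of vertices adjacent to every member of $A$ and to no member of $\mathcal{A}\setminus A$ is finite and nonzero; (S3) for every $\ell$-subset $B\subset\mathcal{A}$ the number of vertices adjacent to no member of $B$ and to every member of $\mathcal{A}\setminus B$ is finite and nonzero. $\mathcal{A}$ is an $\ell$-flower if: (F1) every vertex of the other bipart is adjacent to exactly $\ell+1$ members of $\mathcal{A}$, or to all members, or to none; (F2) as (S2); (F3) infinitely many vertices are adjacent to all members of $\mathcal{A}$. An $i$-regular star is the set of all $i$-subsets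 of $\Omega$ containing a fixed $(i-1)$-subset; a $j$-regular star is defined likewise. *)

theory Defs
  imports Main
begin

definition ksub :: "'a set \<Rightarrow> nat \<Rightarrow> 'a set set" where
  "ksub \<Omega> n = {A. A \<subseteq> \<Omega> \<and> finite A \<and> card A = n}"

(* Vertices of Gamma^Omega_{i,j;>=k} are tagged sets: (False, A) lies in the
   bipart of i-subsets, (True, B) in the bipart of j-subsets (two disjoint copies
   even when i = j). *)
definition bipart_i :: "'a set \<Rightarrow> nat \<Rightarrow> (bool \<times> 'a set) set" where
  "bipart_i \<Omega> i = {(False, A) | A. A \<in> ksub \<Omega> i}"

definition bipart_j :: "'a set \<Rightarrow> nat \<Rightarrow> (bool \<times> 'a set) set" where
  "bipart_j \<Omega> j = {(True, B) | B. B \<in> ksub \<Omega> j}"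

definition gadj :: "nat \<Rightarrow> bool \<times> 'a set \<Rightarrow> bool \<times> 'a set \<Rightarrow> bool" where
  "gadj k x y = (fst x \<noteq> fst y \<and> k \<le> card (snd x \<inter> snd y))"

(* generic l-star / l-flower: A is an infinite family in one bipart, Q the other
   bipart, adj v a the adjacency of v \<in> Q with a \<in> A *)
definition is_star_in :: "nat \<Rightarrow> ('v \<Rightarrow> 'v \<Rightarrow> bool) \<Rightarrow> 'v set \<Rightarrow> 'v set \<Rightarrow> bool" where
  "is_star_in l adj Q \<A> =
    (infinite \<A> \<and>
     (\<forall>v\<in>Q. (finite {a\<in>\<A>. adj v a} \<and> card {a\<in>\<A>. adj v a} = l + 1)
           \<or> (finite {a\<in>\<A>. \<not> adj v a} \<and> card {a\<in>\<A>. \<not> adj v a} = l)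
           \<or> {a\<in>\<A>. adj v a} = {}) \<and>
     (\<forall>A. A \<subseteq> \<A> \<and> finite A \<and> card A = l + 1 \<longrightarrow>
        finite {v\<in>Q. (\<forall>a\<in>A. adj v a) \<and> (\<forall>a\<in>\<A> - A. \<not> adj v a)} \<and>
        {v\<in>Q. (\<forall>a\<in>A. adj v a) \<and> (\<forall>a\<in>\<A> - A. \<not> adj v a)} \<noteq> {}) \<and>
     (\<forall>B. B \<subseteq> \<A> \<and> finite B \<and> card B = l \<longrightarrow>
        finite {v\<in>Q. (\<forall>b\<in>B. \<not> adj v b) \<and> (\<forall>a\<in>\<A> - B. adj v a)} \<and>
        {v\<in>Q. (\<forall>b\<in>B. \<not> adj v b) \<and> (\<forall>a\<in>\<A> - B. adj v a)} \<noteq> {}))"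

definition is_flower_in :: "nat \<Rightarrow> ('v \<Rightarrow> 'v \<Rightarrow> bool) \<Rightarrow> 'v set \<Rightarrow> 'v set \<Rightarrow> bool" where
  "is_flower_in l adj Q \<A> =
    (infinite \<A> \<and>
     (\<forall>v\<in>Q. (finite {a\<in>\<A>. adj v a} \<and> card {a\<in>\<A>. adj v a} = l + 1)
           \<or> (\<forall>a\<in>\<A>. adj v a)
           \<or> {a\<in>\<A>. adj v a} = {}) \<and>
     (\<forall>A. A \<subseteq> \<A> \<and> finite A \<and> card A = l + 1 \<longrightarrow>
        finite {v\<in>Q. (\<forall>a\<in>A. adj v a) \<and> (\<forall>a\<in>\<A> - A. \<not> adj v a)} \<and>
        {v\<in>Q. (\<forall>a\<in>A. adj v a) \<and> (\<forall>a\<in>\<A> - A. \<not> adj v a)} \<noteq> {}) \<and>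
     infinite {v\<in>Q. \<forall>a\<in>\<A>. adj v a})"

definition gamma_star :: "'a set \<Rightarrow> nat \<Rightarrow> nat \<Rightarrow> nat \<Rightarrow> nat \<Rightarrow> (bool \<times> 'a set) set \<Rightarrow> bool" where
  "gamma_star \<Omega> i j k l \<A> =
    ((\<A> \<subseteq> bipart_i \<Omega> i \<and> is_star_in l (gadj k) (bipart_j \<Omega> j) \<A>) \<or>
     (\<A> \<subseteq> bipart_j \<Omega> j \<and> is_star_in l (gadj k) (bipart_i \<Omega> i) \<A>))"

definition gamma_flower :: "'a set \<Rightarrow> nat \<Rightarrow> nat \<Rightarrow> nat \<Rightarrow> nat \<Rightarrow> (bool \<times> 'a set) set \<Rightarrow> bool" where
  "gamma_flower \<Omega> i j k l \<A> =
    ((\<A> \<subseteq> bipart_i \<Omega> i \<and> is_flower_in l (gadj k) (bipart_j \<Omega> j) \<A>) \<or>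
     (\<A> \<subseteq> bipart_j \<Omega> j \<and> is_flower_in l (gadj k) (bipart_i \<Omega> i) \<A>))"

definition i_regular_star :: "'a set \<Rightarrow> nat \<Rightarrow> (bool \<times> 'a set) set \<Rightarrow> bool" where
  "i_regular_star \<Omega> i \<A> =
    (\<exists>S \<in> ksub \<Omega> (i - 1). \<A> = {(False, A) | A. A \<in> ksub \<Omega> i \<and> S \<subseteq> A})"

definition j_regular_star :: "'a set \<Rightarrow> nat \<Rightarrow> (bool \<times> 'a set) set \<Rightarrow> bool" where
  "j_regular_star \<Omega> j \<A> =
    (\<exists>S \<in> ksub \<Omega> (j - 1). \<A> = {(True, B) | B. B \<in> ksub \<Omega> j \<and> S \<subseteq> B})"

end

theory Submission imports Defs begin


lemma weak_sunflower:
  "\<lbrakk>\<forall>A\<in>F. finite A \<and> card A = n; infinite F\<rbrakk> \<Longrightarrow>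
   \<exists>F'\<subseteq>F. infinite F' \<and> (\<exists>K. (\<forall>A\<in>F'. K \<subseteq> A) \<and> (\<forall>y. y \<notin> K \<longrightarrow> finite {A\<in>F'. y \<in> A}))"
proof (induction n arbitrary: F)
  case 0
  then have "F \<subseteq> {{}}" by auto
  then show ?case using 0 finite_subset by blast
next
  case (Suc n)
  show ?case
  proof (cases "\<exists>x. infinite {A\<in>F. x \<in> A}")
    case True
    then obtain x where x: "infinite {A\<in>F. x \<in> A}" by blast
    define F1 where "F1 = (\<lambda>A. A - {x}) ` {A\<in>F. x\<in>A}"
    have inj: "inj_on (\<lambda>A. A - {x}) {A\<in>F. x\<in>A}"
      unfolding inj_on_def by (metis (no_types, lifting) insert_Diff mem_Collect_eq)
    have i1: "infinite F1" using x inj finite_image_iff unfolding F1_def by blast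
    have i2: "\<forall>A\<in>F1. finite A \<and> card A = n" using Suc.prems by (auto simp: F1_def)
    obtain F1' K1 where F1': "F1' \<subseteq> F1" "infinite F1'" "\<forall>A\<in>F1'. K1 \<subseteq> A"
      "\<forall>y. y \<notin> K1 \<longrightarrow> finite {A\<in>F1'. y \<in> A}"
      using Suc.IH[OF i2 i1] by auto
    have xn: "\<forall>A\<in>F1'. x \<notin> A" using F1'(1) by (auto simp: F1_def)
    define F' where "F' = insert x ` F1'"
    have "F' \<subseteq> F"
    proof
      fix A assume "A \<in> F'"
      then obtain A' where "A' \<in> F1'" "A = insert x A'" by (auto simp: F'_def)
      then obtain A0 where "A0 \<in> F" "x \<in> A0" "A' = A0 - {x}" using F1'(1) by (auto simp: F1_def)
      then show "A \<in> F" using \<open>A = insert x A'\<close> by (simp add: insert_absorb)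
    qed
    moreover have "inj_on (insert x) F1'"
      unfolding inj_on_def using xn by (metis Diff_insert_absorb)
    then have "infinite F'" using F1'(2) finite_image_iff unfolding F'_def by blast
    moreover have "\<forall>A\<in>F'. insert x K1 \<subseteq> A" using F1'(3) by (auto simp: F'_def)
    moreover have "\<forall>y. y \<notin> insert x K1 \<longrightarrow> finite {A\<in>F'. y \<in> A}"
    proof (intro allI impI)
      fix y assume y: "y \<notin> insert x K1"
      have "{A\<in>F'. y \<in> A} \<subseteq> insert x ` {A\<in>F1'. y \<in> A}" using y by (auto simp: F'_def)
      then show "finite {A\<in>F'. y \<in> A}" using F1'(4) y finite_subset by blast
    qed
    ultimately show ?thesis by blast
  next
    case False
    then show ?thesis using Suc.prems by blast
  qed
qed

lemma transfer_flower:
  assumes g: "inj g" and h: "inj h"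
  shows "is_flower_in l adj (h ` Q) (g ` F) = is_flower_in l (\<lambda>v a. adj (h v) (g a)) Q F"
proof -
  have e1: "{a \<in> g ` F. adj (h q) a} = g ` {a\<in>F. adj (h q) (g a)}" for q by auto
  have e1b: "{a \<in> g ` F. \<not> adj (h q) a} = g ` {a\<in>F. \<not> adj (h q) (g a)}" for q by auto
  have fc: "finite (g ` S) = finite S" "card (g ` S) = card S" for S
    using g by (auto simp: finite_image_iff card_image inj_on_subset)
  have coll: "{v \<in> h ` Q. P v} = h ` {q\<in>Q. P (h q)}" for P by auto
  have dif: "g ` F - g ` A = g ` (F - A)" for A using g by (simp add: image_set_diff)
  have fh: "finite (h ` S) = finite S" for S
    using h by (auto simp: finite_image_iff inj_on_subset)
  have sub: "(\<forall>A. A \<subseteq> g ` F \<and> finite A \<and> card A = l + 1 \<longrightarrow> P A) =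
             (\<forall>A. A \<subseteq> F \<and> finite A \<and> card A = l + 1 \<longrightarrow> P (g ` A))" for P
  proof
    assume H: "\<forall>A. A \<subseteq> g ` F \<and> finite A \<and> card A = l + 1 \<longrightarrow> P A"
    show "\<forall>A. A \<subseteq> F \<and> finite A \<and> card A = l + 1 \<longrightarrow> P (g ` A)"
      using H fc by (metis image_mono)
  next
    assume H: "\<forall>A. A \<subseteq> F \<and> finite A \<and> card A = l + 1 \<longrightarrow> P (g ` A)"
    show "\<forall>A. A \<subseteq> g ` F \<and> finite A \<and> card A = l + 1 \<longrightarrow> P A"
      using H fc by (metis subset_image_iff)
  qed
  have imgall: "(\<forall>x. x \<in> g ` F \<longrightarrow> P x) \<longleftrightarrow> (\<forall>x. x \<in> F \<longrightarrow> P (g x))" for P by auto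
  show ?thesis
    unfolding is_flower_in_def sub dif coll
    by (simp add: e1 fc fh imgall)

qed



lemma card_split:
  assumes "K \<subseteq> A" "finite B"
  shows "card (B \<inter> A) = card (B \<inter> K) + card (B \<inter> (A - K))"
proof -
  have "B \<inter> A = (B \<inter> K) \<union> (B \<inter> (A - K))" using assms by auto
  moreover have "(B \<inter> K) \<inter> (B \<inter> (A - K)) = {}" by auto
  ultimately show ?thesis using assms card_Un_disjoint by (metis finite_Int)
qed

lemma arith1:
  fixes l k t b :: nat
  assumes "(l+1)*(k-t) \<le> b - t" "t < k" "k < b" "b - k \<le> l"
  shows "t = k - 1 \<and> l = b - k"
proof -
  have e: "b - t = (b - k) + (k - t)" using assms by simp
  have "(b - k + 1)*(k-t) \<le> (l+1)*(k-t)" using assms(4) by (intro mult_le_mono1) simp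
  then have "(b - k)*(k-t) + (k - t) \<le> (b - k) + (k - t)" using assms(1) e by (simp add: algebra_simps)
  then have "(b - k)*(k-t) \<le> (b - k) * 1" by simp
  then have "k - t \<le> 1" using assms(3) by (metis mult_le_cancel1 zero_less_diff)
  then have t: "t = k - 1" using assms(2) by simp
  then have "(l+1) \<le> b - k + 1" using assms(1,2,3) by simp
  then show ?thesis using t assms(4) by simp
qed

lemma le_card_mono: "n \<le> card X \<Longrightarrow> X \<subseteq> Y \<Longrightarrow> finite Y \<Longrightarrow> n \<le> card Y"
  using card_mono le_trans by blast

locale flw =
  fixes Om :: "'a set" and a b k l :: nat and F F' :: "'a set set" and K :: "'a set"
  assumes infO: "infinite Om" and k1: "1 \<le> k" and ka: "k < a" and kb: "k < b" and l0: "0 < l"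
  and Fsub: "F \<subseteq> ksub Om a"
  and fl: "is_flower_in l (\<lambda>B A. k \<le> card (B \<inter> A)) (ksub Om b) F"
  and F'F: "F' \<subseteq> F" and infF': "infinite F'" and KA: "\<forall>A\<in>F'. K \<subseteq> A"
  and finy: "\<forall>y. y \<notin> K \<longrightarrow> finite {A\<in>F'. y \<in> A}"
begin

lemma F1: "B \<in> ksub Om b \<Longrightarrow> (finite {A\<in>F. k \<le> card (B \<inter> A)} \<and> card {A\<in>F. k \<le> card (B \<inter> A)} = l+1)
   \<or> (\<forall>A\<in>F. k \<le> card (B \<inter> A)) \<or> {A\<in>F. k \<le> card (B \<inter> A)} = {}"
  using fl unfolding is_flower_in_def by blast

lemma F2: "X \<subseteq> F \<Longrightarrow> finite X \<Longrightarrow> card X = l+1 \<Longrightarrow>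
  {B\<in>ksub Om b. (\<forall>A\<in>X. k \<le> card (B \<inter> A)) \<and> (\<forall>A\<in>F-X. \<not> k \<le> card (B \<inter> A))} \<noteq> {}"
  using fl unfolding is_flower_in_def by blast

lemma F3: "infinite {B\<in>ksub Om b. \<forall>A\<in>F. k \<le> card (B \<inter> A)}"
  using fl unfolding is_flower_in_def by blast

lemma infF: "infinite F" using fl unfolding is_flower_in_def by blast

lemma Fmem: "A \<in> F \<Longrightarrow> A \<subseteq> Om \<and> finite A \<and> card A = a" using Fsub by (auto simp: ksub_def)

lemma kmem: "B \<in> ksub Om b \<Longrightarrow> B \<subseteq> Om \<and> finite B \<and> card B = b" by (auto simp: ksub_def)

lemma F'ne: "F' \<noteq> {}" using infF' by auto

lemma Kfin: "finite K" and KOm: "K \<subseteq> Om" and cardK: "card K < a"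
proof -
  obtain A0 where A0: "A0 \<in> F'" using F'ne by auto
  then have "A0 \<in> F" using F'F by auto
  then have "K \<subseteq> A0" "A0 \<subseteq> Om" "finite A0" "card A0 = a" using KA A0 Fmem by auto
  then show "finite K" "K \<subseteq> Om" using finite_subset by auto
  show "card K < a"
  proof (rule ccontr)
    assume "\<not> card K < a"
    then have "\<forall>A\<in>F'. A = K"
      using KA F'F Fmem by (metis card_seteq not_less subsetD)
    then have "F' \<subseteq> {K}" by auto
    then show False using infF' finite_subset by blast
  qed
qed

lemma badfin: "finite E \<Longrightarrow> finite {A\<in>F'. (A - K) \<inter> E \<noteq> {}}"
proof -
  assume E: "finite E"
  have "{A\<in>F'. (A - K) \<inter> E \<noteq> {}} \<subseteq> (\<Union>y\<in>E-K. {A\<in>F'. y\<in>A})" by auto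
  moreover have "finite (\<Union>y\<in>E-K. {A\<in>F'. y\<in>A})"
    by (rule finite_UN_I) (use E finy in auto)
  ultimately show ?thesis using finite_subset by blast
qed

lemma avoid: "finite E \<Longrightarrow> finite G \<Longrightarrow> \<exists>A\<in>F'. A \<notin> G \<and> (A - K) \<inter> E = {}"
proof -
  assume E: "finite E" and G: "finite G"
  have "infinite (F' - G)" using infF' G by (rule Diff_infinite_finite[rotated])
  then have "infinite (F' - G - {A\<in>F'. (A - K) \<inter> E \<noteq> {}})"
    using badfin[OF E] by (rule Diff_infinite_finite[rotated])
  then have "F' - G - {A\<in>F'. (A - K) \<inter> E \<noteq> {}} \<noteq> {}" by (rule infinite_imp_nonempty)
  then obtain A where "A \<in> F' - G - {A\<in>F'. (A - K) \<inter> E \<noteq> {}}"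
    by blast
  then show ?thesis by auto
qed

lemma petals: "finite E \<Longrightarrow> \<exists>G\<subseteq>F'. finite G \<and> card G = n \<and> (\<forall>A\<in>G. (A - K) \<inter> E = {})
   \<and> (\<forall>A\<in>G. \<forall>A'\<in>G. A \<noteq> A' \<longrightarrow> (A - K) \<inter> (A' - K) = {})"
proof (induction n)
  case 0
  then show ?case by (intro exI[of _ "{}"]) auto
next
  case (Suc n)
  obtain G where G: "G\<subseteq>F'" "finite G" "card G = n" "\<forall>A\<in>G. (A - K) \<inter> E = {}"
    "\<forall>A\<in>G. \<forall>A'\<in>G. A \<noteq> A' \<longrightarrow> (A - K) \<inter> (A' - K) = {}"
    using Suc.IH[OF Suc.prems] by auto
  have "\<forall>A\<in>G. finite A" using G(1) F'F Fmem by blast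
  then have "finite (\<Union>G)" using G(2) by (intro finite_Union) auto
  then have "finite (E \<union> \<Union>G)" using Suc.prems by blast
  then obtain A where A: "A \<in> F'" "A \<notin> G" "(A - K) \<inter> (E \<union> \<Union>G) = {}" using avoid[OF _ G(2)] by blast
  show ?case
  proof (intro exI[of _ "insert A G"] conjI)
    show "card (insert A G) = Suc n" using A G by simp
    show "\<forall>Aa\<in>insert A G. \<forall>A'\<in>insert A G. Aa \<noteq> A' \<longrightarrow> (Aa - K) \<inter> (A' - K) = {}"
    proof (intro ballI impI)
      fix X Y assume XY: "X \<in> insert A G" "Y \<in> insert A G" "X \<noteq> Y"
      have dA: "(A - K) \<inter> (Z - K) = {}" if "Z \<in> G" for Z using A(3) that by blast
      show "(X - K) \<inter> (Y - K) = {}"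
      proof (cases "X = A")
        case True then show ?thesis using XY dA by auto
      next
        case False
        then have X: "X \<in> G" using XY by auto
        show ?thesis
        proof (cases "Y = A")
          case True then show ?thesis using X dA by blast
        next
          case False then show ?thesis using X XY G(5) by auto
        qed
      qed
    qed
    show "insert A G \<subseteq> F'" using A(1) G(1) by blast
    show "finite (insert A G)" using G(2) by blast
    show "\<forall>Aa\<in>insert A G. (Aa - K) \<inter> E = {}" using A(3) G(4) by blast
  qed
qed

lemma alladj: "B \<in> ksub Om b \<Longrightarrow> k \<le> card (B \<inter> K) \<Longrightarrow> \<forall>A\<in>F. k \<le> card (B \<inter> A)"
proof -
  assume B: "B \<in> ksub Om b" and kB: "k \<le> card (B \<inter> K)"
  have "F' \<subseteq> {A\<in>F. k \<le> card (B \<inter> A)}"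
  proof
    fix A assume A: "A \<in> F'"
    have "B \<inter> K \<subseteq> B \<inter> A" using KA A by auto
    then have "card (B \<inter> K) \<le> card (B \<inter> A)" using kmem[OF B] by (simp add: card_mono)
    then show "A \<in> {A\<in>F. k \<le> card (B \<inter> A)}" using kB A F'F by auto
  qed
  then show ?thesis using F1[OF B] infF' F'ne finite_subset by blast
qed

lemma notall: "finite B \<Longrightarrow> card (B \<inter> K) < k \<Longrightarrow> \<exists>A\<in>F. \<not> k \<le> card (B \<inter> A)"
proof -
  assume B: "finite B" and c: "card (B \<inter> K) < k"
  obtain A where A: "A \<in> F'" "(A - K) \<inter> B = {}" using avoid[OF B, of "{}"] by auto
  then have "B \<inter> A \<subseteq> B \<inter> K" by auto
  then have "card (B \<inter> A) \<le> card (B \<inter> K)" using B by (simp add: card_mono)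
  then show ?thesis using A F'F c by force
qed

lemma kK: "k \<le> card K"
proof -
  obtain B where B: "B \<in> ksub Om b" "\<forall>A\<in>F. k \<le> card (B \<inter> A)"
    using F3 by (metis (no_types, lifting) empty_Collect_eq finite.emptyI)
  then have "k \<le> card (B \<inter> K)" using notall kmem by (meson not_le)
  also have "\<dots> \<le> card K" using Kfin by (simp add: card_mono)
  finally show ?thesis .
qed

lemma KsubAll: "A0 \<in> F \<Longrightarrow> K \<subseteq> A0"
proof (rule ccontr)
  assume A0: "A0 \<in> F" and "\<not> K \<subseteq> A0"
  then obtain z where z: "z \<in> K" "z \<notin> A0" by auto
  have "k - 1 \<le> card (K - {z})" using kK z Kfin by simp
  then obtain T0 where T0: "T0 \<subseteq> K - {z}" "card T0 = k - 1" "finite T0"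
    by (meson obtain_subset_with_card_n)
  define T where "T = insert z T0"
  have "z \<notin> T0" using T0 by auto
  then have cT: "card T = k" using T0 k1 unfolding T_def by simp
  have "infinite (Om - (K \<union> A0))" using infO Kfin Fmem[OF A0] by (simp add: Diff_infinite_finite)
  then obtain R where R: "finite R" "card R = b - k" "R \<subseteq> Om - (K \<union> A0)"
    using infinite_arbitrarily_large by blast
  define B where "B = T \<union> R"
  have TK: "T \<subseteq> K" using T0 z unfolding T_def by auto
  have "card B = b" unfolding B_def using TK R cT kb T0
    by (subst card_Un_disjoint) (auto simp: T_def)
  moreover have "B \<subseteq> Om" using TK KOm R unfolding B_def by auto
  moreover have "finite B" using R T0 unfolding B_def T_def by auto
  ultimately have B: "B \<in> ksub Om b" by (simp add: ksub_def)
  have "T \<subseteq> B \<inter> K" using TK unfolding B_def by auto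
  then have "k \<le> card (B \<inter> K)" using cT Kfin by (metis card_mono finite_Int)
  then have "k \<le> card (B \<inter> A0)" using alladj[OF B] A0 by auto
  moreover have "B \<inter> A0 \<subseteq> T0" using R z T0 unfolding B_def T_def by auto
  then have "card (B \<inter> A0) \<le> k - 1" using T0 by (metis card_mono)
  ultimately show False using k1 by linarith
qed

lemma petal_ne: "A \<in> F' \<Longrightarrow> A - K \<noteq> {}"
proof
  assume A: "A \<in> F'" "A - K = {}"
  then have "A \<subseteq> K" by auto
  then have "card A \<le> card K" using Kfin card_mono by blast
  then show False using Fmem A F'F cardK by auto
qed

lemma points:
  assumes G: "G \<subseteq> F'" "finite G" "\<forall>A\<in>G. \<forall>A'\<in>G. A \<noteq> A' \<longrightarrow> (A - K) \<inter> (A' - K) = {}"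
  shows "\<exists>p. (\<forall>A\<in>G. p A \<in> A - K) \<and> inj_on p G \<and> card (p ` G) = card G \<and> p ` G \<inter> K = {}
          \<and> p ` G \<subseteq> Om \<and> finite (p ` G)"
proof -
  define p where "p A = (SOME x. x \<in> A - K)" for A
  have pA: "p A \<in> A - K" if "A \<in> G" for A
  proof -
    have "A - K \<noteq> {}" using petal_ne G(1) that by auto
    then show ?thesis unfolding p_def by (metis some_in_eq)
  qed
  have inj: "inj_on p G"
  proof (rule inj_onI)
    fix A A' assume AA: "A \<in> G" "A' \<in> G" "p A = p A'"
    then have "p A \<in> (A - K) \<inter> (A' - K)" using pA[OF AA(1)] pA[OF AA(2)] by auto
    then show "A = A'" using G(3) AA(1,2) by blast
  qed
  have c: "card (p ` G) = card G" using inj by (simp add: card_image)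
  have d: "p ` G \<inter> K = {}" using pA by auto
  have e: "p ` G \<subseteq> Om"
  proof
    fix x assume "x \<in> p ` G"
    then obtain A where "A \<in> G" "x = p A" by auto
    then have "x \<in> A" "A \<in> F" using pA G(1) F'F by auto
    then show "x \<in> Om" using Fmem by auto
  qed
  show ?thesis using pA inj c d e G(2) by (intro exI[of _ p]) auto
qed

lemma lower: "b - k + 1 \<le> l + 1"
proof -
  have "finite ({}::'a set)" by simp
  from petals[OF this, of "b - k + 1"] obtain G where G: "G\<subseteq>F'" "finite G" "card G = b - k + 1"
    "\<forall>A\<in>G. \<forall>A'\<in>G. A \<noteq> A' \<longrightarrow> (A - K) \<inter> (A' - K) = {}" by (metis (no_types, lifting))
  from points[OF G(1) G(2) G(4)] obtain p where p: "\<forall>A\<in>G. p A \<in> A - K" "card (p ` G) = card G" "p ` G \<inter> K = {}"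
          "p ` G \<subseteq> Om" "finite (p ` G)" by blast
  have "k - 1 \<le> card K" using kK by simp
  then obtain S where S: "S \<subseteq> K" "card S = k - 1" "finite S" by (meson obtain_subset_with_card_n)
  define B where "B = S \<union> p ` G"
  have "card B = b" unfolding B_def using S p G k1 kb by (subst card_Un_disjoint) auto
  moreover have "B \<subseteq> Om" using S KOm p unfolding B_def by auto
  moreover have fB: "finite B" using S p unfolding B_def by auto
  ultimately have B: "B \<in> ksub Om b" by (simp add: ksub_def)
  have "B \<inter> K = S" using S p unfolding B_def by auto
  then have "card (B \<inter> K) < k" using S k1 by simp
  then have na: "\<not> (\<forall>A\<in>F. k \<le> card (B \<inter> A))" using notall fB by blast
  have Gsub: "G \<subseteq> {A\<in>F. k \<le> card (B \<inter> A)}"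
  proof
    fix A assume A: "A \<in> G"
    have "insert (p A) S \<subseteq> B \<inter> A" using A p(1) S KA G(1) unfolding B_def by auto
    moreover have "p A \<notin> S" using A p(1) S by auto
    then have "card (insert (p A) S) = k" using S k1 by simp
    ultimately have "k \<le> card (B \<inter> A)" using fB by (metis card_mono finite_Int)
    then show "A \<in> {A\<in>F. k \<le> card (B \<inter> A)}" using A G(1) F'F by auto
  qed
  have "G \<noteq> {}" using G(3) by auto
  define Ad where "Ad = {A\<in>F. k \<le> card (B \<inter> A)}"
  have ne: "Ad \<noteq> {}" using Gsub \<open>G \<noteq> {}\<close> unfolding Ad_def by blast
  have "finite Ad \<and> card Ad = l+1"
    using F1[OF B, folded Ad_def] na ne by argo
  moreover have "card G \<le> card Ad" using Gsub calculation unfolding Ad_def by (intro card_mono) auto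
  ultimately have "card G \<le> l + 1" by simp
  then show ?thesis using G(3) by simp
qed



lemma exactB: "\<exists>G B. G \<subseteq> F' \<and> finite G \<and> card G = l+1 \<and>
   (\<forall>A\<in>G. \<forall>A'\<in>G. A \<noteq> A' \<longrightarrow> (A - K) \<inter> (A' - K) = {}) \<and> B \<in> ksub Om b \<and>
   (\<forall>A\<in>G. k \<le> card (B \<inter> A)) \<and> (\<forall>A\<in>F-G. \<not> k \<le> card (B \<inter> A))"
proof -
  have "finite ({}::'a set)" by simp
  from petals[OF this, of "l + 1"] obtain G where G: "G\<subseteq>F'" "finite G" "card G = l + 1"
    "\<forall>A\<in>G. \<forall>A'\<in>G. A \<noteq> A' \<longrightarrow> (A - K) \<inter> (A' - K) = {}" by (metis (no_types, lifting))
  have "G \<subseteq> F" using G(1) F'F by blast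
  from F2[OF this G(2) G(3)] obtain B where B: "B \<in> ksub Om b" "\<forall>A\<in>G. k \<le> card (B \<inter> A)"
    "\<forall>A\<in>F-G. \<not> k \<le> card (B \<inter> A)" by blast
  show ?thesis by (intro exI[of _ G] exI[of _ B] conjI) (rule G B)+
qed

lemma upper:
  assumes G: "G \<subseteq> F'" "finite G" "card G = l+1" "\<forall>A\<in>G. \<forall>A'\<in>G. A \<noteq> A' \<longrightarrow> (A - K) \<inter> (A' - K) = {}"
  and B: "B \<in> ksub Om b" "\<forall>A\<in>G. k \<le> card (B \<inter> A)" "\<forall>A\<in>F-G. \<not> k \<le> card (B \<inter> A)"
  shows "card (B \<inter> K) = k - 1 \<and> l = b - k \<and> (\<forall>A\<in>G. card (B \<inter> (A - K)) = 1)"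
proof -
  have fB: "finite B" and cB: "card B = b" using kmem[OF B(1)] by auto
  define t where "t = card (B \<inter> K)"
  have "F - G \<noteq> {}"
  proof
    assume "F - G = {}"
    then have "F \<subseteq> G" by blast
    then show False using infF G(2) finite_subset by blast
  qed
  then obtain A0 where A0: "A0 \<in> F - G" by blast
  have tk: "t < k"
  proof (rule ccontr)
    assume "\<not> t < k"
    then have "\<forall>A\<in>F. k \<le> card (B \<inter> A)" using alladj[OF B(1)] unfolding t_def by simp
    then show False using A0 B(3) by blast
  qed
  have split: "card (B \<inter> A) = t + card (B \<inter> (A - K))" if "A \<in> G" for A
    unfolding t_def using card_split KA G(1) fB that by blast
  have ge: "k - t \<le> card (B \<inter> (A - K))" if "A \<in> G" for A
  proof -
    have "k \<le> card (B \<inter> A)" using B(2) that by blast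
    then show ?thesis using split[OF that] by linarith
  qed
  define U where "U = (\<Union>A\<in>G. B \<inter> (A - K))"
  have disj: "\<forall>A\<in>G. \<forall>A'\<in>G. A \<noteq> A' \<longrightarrow> (B \<inter> (A - K)) \<inter> (B \<inter> (A' - K)) = {}"
    using G(4) by blast
  have cU: "card U = (\<Sum>A\<in>G. card (B \<inter> (A - K)))" unfolding U_def
    by (rule card_UN_disjoint) (use G(2) fB disj in auto)
  have "U \<subseteq> B - K" unfolding U_def by blast
  then have "card U \<le> card (B - K)" using fB by (simp add: card_mono)
  moreover have "card B = t + card (B - K)" unfolding t_def using fB
    by (metis Diff_Diff_Int Int_commute card_Diff_subset_Int card_mono finite_Int inf_le1 le_add_diff_inverse
        card_Int_Diff Int_lower1)
  ultimately have tU: "t + card U \<le> b" using cB by simp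
  have "card G * (k - t) \<le> (\<Sum>A\<in>G. card (B \<inter> (A - K)))"
    using sum_bounded_below[of G "k - t" "\<lambda>A. card (B \<inter> (A - K))"] ge by simp
  then have "(l+1)*(k-t) \<le> b - t" using G(3) cU tU by simp
  from arith1[OF this tk kb] lower have at: "t = k - 1 \<and> l = b - k" by simp
  have "\<forall>A\<in>G. card (B \<inter> (A - K)) = 1"
  proof
    fix A1 assume A1: "A1 \<in> G"
    have g1: "1 \<le> card (B \<inter> (A - K))" if "A \<in> G" for A using ge[OF that] at tk by simp
    show "card (B \<inter> (A1 - K)) = 1"
    proof (rule ccontr)
      assume "card (B \<inter> (A1 - K)) \<noteq> 1"
      then have "2 \<le> card (B \<inter> (A1 - K))" using g1[OF A1] by simp
      moreover have "card (G - {A1}) * 1 \<le> (\<Sum>A\<in>G - {A1}. card (B \<inter> (A - K)))"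
        using sum_bounded_below[of "G - {A1}" 1 "\<lambda>A. card (B \<inter> (A - K))"] g1 by simp
      moreover have "(\<Sum>A\<in>G. card (B \<inter> (A - K))) = card (B \<inter> (A1 - K)) + (\<Sum>A\<in>G - {A1}. card (B \<inter> (A - K)))"
        using A1 G(2) by (simp add: sum.remove)
      moreover have "card (G - {A1}) = l" using A1 G(2,3) by simp
      ultimately have "l + 2 \<le> card U" using cU by simp
      then show False using tU at kb by simp
    qed
  qed
  then show ?thesis using at unfolding t_def by simp
qed

lemma lbk: "l = b - k"
  using exactB upper by blast


lemma cardK_eq: "card K = a - 1"
proof (rule ccontr)
  assume "card K \<noteq> a - 1"
  then have K2: "card K + 2 \<le> a" using cardK by simp
  obtain G B where G: "G \<subseteq> F'" "finite G" "card G = l+1"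
    "\<forall>A\<in>G. \<forall>A'\<in>G. A \<noteq> A' \<longrightarrow> (A - K) \<inter> (A' - K) = {}"
    and B: "B \<in> ksub Om b" "\<forall>A\<in>G. k \<le> card (B \<inter> A)" "\<forall>A\<in>F-G. \<not> k \<le> card (B \<inter> A)"
    using exactB by blast
  have U: "card (B \<inter> K) = k - 1" "\<forall>A\<in>G. card (B \<inter> (A - K)) = 1"
    using upper[OF G B] by auto
  have fB: "finite B" and cB: "card B = b" and BOm: "B \<subseteq> Om" using kmem[OF B(1)] by auto
  have "G \<noteq> {}" using G(3) by auto
  then obtain A1 where A1: "A1 \<in> G" by blast
  have "card (G - {A1}) = l" using A1 G(2,3) by simp
  then have "G - {A1} \<noteq> {}" using l0 by (metis card.empty less_irrefl)
  then obtain A2 where A2: "A2 \<in> G" "A2 \<noteq> A1" by blast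
  have A1F: "A1 \<in> F" "A2 \<in> F" using A1 A2 G(1) F'F by auto
  have KA12: "K \<subseteq> A1" "K \<subseteq> A2" using KA A1 A2 G(1) by auto
  have dis12: "(A1 - K) \<inter> (A2 - K) = {}" using G(4) A1 A2 by blast
  obtain p1 where p1: "B \<inter> (A1 - K) = {p1}" using U(2) A1 by (meson card_1_singletonE)
  obtain p2 where p2: "B \<inter> (A2 - K) = {p2}" using U(2) A2 by (meson card_1_singletonE)
  have cA1: "card (A1 - K) = a - card K" using card_Diff_subset[OF Kfin KA12(1)] Fmem[OF A1F(1)] by simp
  have "card (A1 - K) - card {p1} \<le> card (A1 - K - {p1})" by (rule diff_card_le_card_Diff) simp
  then have "card (A1 - K - {p1}) \<ge> 1" using K2 cA1 by simp
  then have "A1 - K - {p1} \<noteq> {}" by (metis card.empty not_one_le_zero)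
  then obtain q where q: "q \<in> A1" "q \<notin> K" "q \<noteq> p1" by blast
  have qB: "q \<notin> B" using q p1 by blast
  have p1f: "p1 \<in> B" "p1 \<in> A1" "p1 \<notin> K" using p1 by blast+
  have p2f: "p2 \<in> B" "p2 \<in> A2" "p2 \<notin> K" using p2 by blast+
  have nA1: "p1 \<notin> A \<and> q \<notin> A" if "A \<in> G" "A \<noteq> A1" for A
  proof -
    have "(A1 - K) \<inter> (A - K) = {}" using G(4) A1 that by blast
    then show ?thesis using p1f q by blast
  qed
  have nA2: "p2 \<notin> A" if "A \<in> G" "A \<noteq> A2" for A
  proof -
    have "(A2 - K) \<inter> (A - K) = {}" using G(4) A2 that by blast
    then show ?thesis using p2f by blast
  qed
  have cBA2: "card (B \<inter> A2) = k"
    using card_split[OF KA12(2) fB] U A2 k1 by simp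
  have fBK: "finite (B \<inter> K)" using fB by simp
  have cqK: "card (insert q (B \<inter> K)) = k" using U(1) q(2) fBK k1 by simp
  have cp1K: "card (insert p1 (B \<inter> K)) = k" using U(1) p1f(3) fBK k1 by simp
  have qOm: "q \<in> Om" using q(1) Fmem[OF A1F(1)] by blast
  define B2 where "B2 = insert q (B - {p2})"
  have fB2: "finite B2" using fB unfolding B2_def by simp
  have "card B2 = b" unfolding B2_def using qB p2f(1) fB cB kb by (simp add: card_Diff_singleton_if)
  then have B2: "B2 \<in> ksub Om b" using fB2 BOm qOm unfolding ksub_def B2_def by auto
  define Ad2 where "Ad2 = {A\<in>F. k \<le> card (B2 \<inter> A)}"
  have sub2: "G - {A2} \<subseteq> Ad2"
  proof
    fix A assume A: "A \<in> G - {A2}"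
    then have AF: "A \<in> F" using G(1) F'F by auto
    have "k \<le> card (B2 \<inter> A)"
    proof (cases "A = A1")
      case True
      have "insert q (B \<inter> K) \<subseteq> B2 \<inter> A" using True q KA12(1) p2f(3) unfolding B2_def by blast
      then show ?thesis using cqK fB2 le_card_mono[of k "insert q (B \<inter> K)"] by simp
    next
      case False
      have "p2 \<notin> A" using nA2 A by blast
      then have "B \<inter> A \<subseteq> B2 \<inter> A" unfolding B2_def by blast
      then show ?thesis using B(2) A fB2 le_card_mono[of k "B \<inter> A"] by simp
    qed
    then show "A \<in> Ad2" unfolding Ad2_def using AF by blast
  qed
  have "A2 \<notin> Ad2"
  proof
    assume "A2 \<in> Ad2"
    then have k2: "k \<le> card (B2 \<inter> A2)" unfolding Ad2_def by blast
    have "q \<notin> A2" using nA1[OF A2] by blast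
    then have "B2 \<inter> A2 \<subseteq> (B \<inter> A2) - {p2}" unfolding B2_def by blast
    moreover have "card ((B \<inter> A2) - {p2}) = k - 1" using cBA2 p2f by simp
    ultimately have "card (B2 \<inter> A2) \<le> k - 1" using fB by (metis card_mono finite_Diff finite_Int)
    then show False using k2 k1 by simp
  qed
  then have na2: "\<not> (\<forall>A\<in>F. k \<le> card (B2 \<inter> A))" using A1F(2) unfolding Ad2_def by blast
  have "A1 \<in> Ad2" using sub2 A1 A2 by blast
  then have ne2: "Ad2 \<noteq> {}" by blast
  have Ad2c: "finite Ad2 \<and> card Ad2 = l+1"
    using F1[OF B2, folded Ad2_def] na2 ne2 by argo
  have cG2: "card (G - {A2}) = l" using A2 G(2,3) by simp
  have "\<not> Ad2 \<subseteq> G - {A2}"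
  proof
    assume "Ad2 \<subseteq> G - {A2}"
    then have "card Ad2 \<le> card (G - {A2})" using G(2) by (simp add: card_mono)
    then show False using Ad2c cG2 by simp
  qed
  then obtain As where As: "As \<in> Ad2" "As \<notin> G - {A2}" by blast
  have AsF: "As \<in> F" using As unfolding Ad2_def by blast
  have AsG: "As \<notin> G" using As \<open>A2 \<notin> Ad2\<close> by blast
  have nAs: "\<not> k \<le> card (B \<inter> As)" using B(3) AsF AsG by blast
  have KAs: "K \<subseteq> As" using KsubAll[OF AsF] .
  have qAs: "q \<in> As"
  proof (rule ccontr)
    assume "q \<notin> As"
    then have "B2 \<inter> As \<subseteq> B \<inter> As" unfolding B2_def by blast
    then have "card (B2 \<inter> As) \<le> card (B \<inter> As)" using fB by (simp add: card_mono)
    moreover have "k \<le> card (B2 \<inter> As)" using As unfolding Ad2_def by blast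
    ultimately show False using nAs by simp
  qed
  have p1As: "p1 \<notin> As"
  proof
    assume "p1 \<in> As"
    then have "insert p1 (B \<inter> K) \<subseteq> B \<inter> As" using p1f KAs by blast
    then have "k \<le> card (B \<inter> As)" using cp1K fB le_card_mono[of k "insert p1 (B \<inter> K)"] by simp
    then show False using nAs by simp
  qed
  define B4 where "B4 = insert q (B - {p1})"
  have fB4: "finite B4" using fB unfolding B4_def by simp
  have "card B4 = b" unfolding B4_def using qB p1f(1) fB cB kb by (simp add: card_Diff_singleton_if)
  then have B4: "B4 \<in> ksub Om b" using fB4 BOm qOm unfolding ksub_def B4_def by auto
  define Ad4 where "Ad4 = {A\<in>F. k \<le> card (B4 \<inter> A)}"
  have sub4: "insert As G \<subseteq> Ad4"
  proof
    fix A assume A: "A \<in> insert As G"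
    then have AF: "A \<in> F" using G(1) F'F AsF by auto
    have "k \<le> card (B4 \<inter> A)"
    proof (cases "A = A1 \<or> A = As")
      case True
      have "insert q (B \<inter> K) \<subseteq> B4 \<inter> A" using True q KA12(1) KAs qAs p1f(3) unfolding B4_def by blast
      then show ?thesis using cqK fB4 le_card_mono[of k "insert q (B \<inter> K)"] by simp
    next
      case False
      then have AG: "A \<in> G" using A by blast
      have "p1 \<notin> A" using nA1 AG False by blast
      then have "B \<inter> A \<subseteq> B4 \<inter> A" unfolding B4_def by blast
      then show ?thesis using B(2) AG fB4 le_card_mono[of k "B \<inter> A"] by simp
    qed
    then show "A \<in> Ad4" unfolding Ad4_def using AF by blast
  qed
  have "B4 \<inter> K = B \<inter> K" using p1f(3) q(2) unfolding B4_def by blast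
  then have "card (B4 \<inter> K) < k" using U(1) k1 by simp
  then have na4: "\<not> (\<forall>A\<in>F. k \<le> card (B4 \<inter> A))" using notall fB4 by blast
  have ne4: "Ad4 \<noteq> {}" using sub4 by blast
  have Ad4c: "finite Ad4 \<and> card Ad4 = l+1"
    using F1[OF B4, folded Ad4_def] na4 ne4 by argo
  have "card (insert As G) = l + 2" using AsG G(2,3) by simp
  moreover have "card (insert As G) \<le> card Ad4" using Ad4c by (intro card_mono[OF _ sub4]) simp
  ultimately show False using Ad4c by simp
qed

lemma Fform: "A \<in> F \<Longrightarrow> \<exists>y. y \<notin> K \<and> A = insert y K"
proof -
  assume A: "A \<in> F"
  have KA0: "K \<subseteq> A" using KsubAll[OF A] .
  have "card (A - K) = 1" using card_Diff_subset[OF Kfin KA0] Fmem[OF A] cardK_eq ka by simp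
  then obtain y where "A - K = {y}" by (meson card_1_singletonE)
  then show ?thesis using KA0 by (intro exI[of _ y]) blast
qed

lemma surj: "x \<in> Om - K \<Longrightarrow> insert x K \<in> F"
proof (rule ccontr)
  assume x: "x \<in> Om - K" and nx: "insert x K \<notin> F"
  have "finite {x}" by simp
  from petals[OF this, of l] obtain G where G: "G\<subseteq>F'" "finite G" "card G = l"
    "\<forall>A\<in>G. (A - K) \<inter> {x} = {}"
    "\<forall>A\<in>G. \<forall>A'\<in>G. A \<noteq> A' \<longrightarrow> (A - K) \<inter> (A' - K) = {}" by (metis (no_types, lifting))
  from points[OF G(1) G(2) G(5)] obtain p where p: "\<forall>A\<in>G. p A \<in> A - K" "card (p ` G) = card G" "p ` G \<inter> K = {}"
          "p ` G \<subseteq> Om" "finite (p ` G)" by blast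
  have xP: "x \<notin> p ` G" using p(1) G(4) by blast
  have "k - 1 \<le> card K" using kK by simp
  then obtain S where S: "S \<subseteq> K" "card S = k - 1" "finite S" by (meson obtain_subset_with_card_n)
  define B where "B = S \<union> insert x (p ` G)"
  have "card (insert x (p ` G)) = l + 1" using xP p(2,5) G(3) by simp
  moreover have "S \<inter> insert x (p ` G) = {}" using S p(3) x by blast
  ultimately have "card B = b" unfolding B_def using S p(5) lbk k1 kb by (subst card_Un_disjoint) auto
  moreover have "B \<subseteq> Om" using S KOm p(4) x unfolding B_def by blast
  moreover have fB: "finite B" using S p(5) unfolding B_def by blast
  ultimately have B: "B \<in> ksub Om b" by (simp add: ksub_def)
  have BK: "B \<inter> K = S" using S p(3) x unfolding B_def by blast
  define Ad where "Ad = {A\<in>F. k \<le> card (B \<inter> A)}"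
  have Gsub: "G \<subseteq> Ad"
  proof
    fix A assume A: "A \<in> G"
    have "insert (p A) S \<subseteq> B \<inter> A" using A p(1) S KA G(1) unfolding B_def by blast
    moreover have "p A \<notin> S" using A p(1) S by blast
    then have "card (insert (p A) S) = k" using S k1 by simp
    ultimately have "k \<le> card (B \<inter> A)" using fB le_card_mono[of k "insert (p A) S"] by simp
    then show "A \<in> Ad" unfolding Ad_def using A G(1) F'F by blast
  qed
  have Adsub: "Ad \<subseteq> (\<lambda>y. insert y K) ` (p ` G)"
  proof
    fix A assume A: "A \<in> Ad"
    then have AF: "A \<in> F" and kA: "k \<le> card (B \<inter> A)" unfolding Ad_def by auto
    obtain y where y: "y \<notin> K" "A = insert y K" using Fform[OF AF] by blast
    have yB: "y \<in> B"
    proof (rule ccontr)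
      assume "y \<notin> B"
      then have "B \<inter> A \<subseteq> S" using y BK by blast
      then have "card (B \<inter> A) \<le> k - 1" using S by (metis card_mono)
      then show False using kA k1 by simp
    qed
    have "y \<noteq> x" using nx AF y by blast
    then have "y \<in> p ` G" using yB y(1) S unfolding B_def by blast
    then show "A \<in> (\<lambda>y. insert y K) ` (p ` G)" using y by blast
  qed
  have fAd: "finite Ad" using Adsub p(5) finite_subset by blast
  have "card Ad \<le> card (p ` G)" using Adsub p(5) card_image_le card_mono
    by (metis (no_types, lifting) finite_imageI le_trans)
  then have cAd: "card Ad \<le> l" using p(2) G(3) by simp
  have "G \<noteq> {}" using G(3) l0 by auto
  then have ne: "Ad \<noteq> {}" using Gsub by blast
  have "\<not> (\<forall>A\<in>F. k \<le> card (B \<inter> A))"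
  proof
    assume "\<forall>A\<in>F. k \<le> card (B \<inter> A)"
    then have "F \<subseteq> Ad" unfolding Ad_def by blast
    then show False using fAd infF finite_subset by blast
  qed
  then have "finite Ad \<and> card Ad = l+1"
    using F1[OF B, folded Ad_def] ne by argo
  then show False using cAd by simp
qed

lemma classify: "l = b - k \<and> K \<in> ksub Om (a - 1) \<and> F = {A\<in>ksub Om a. K \<subseteq> A}"
proof (intro conjI)
  show "l = b - k" by (rule lbk)
  show "K \<in> ksub Om (a - 1)" using KOm Kfin cardK_eq unfolding ksub_def by blast
  show "F = {A\<in>ksub Om a. K \<subseteq> A}"
  proof
    show "F \<subseteq> {A\<in>ksub Om a. K \<subseteq> A}" using Fsub KsubAll by blast
    show "{A\<in>ksub Om a. K \<subseteq> A} \<subseteq> F"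
    proof
      fix A assume A: "A \<in> {A\<in>ksub Om a. K \<subseteq> A}"
      then have KA0: "K \<subseteq> A" and Am: "A \<subseteq> Om" "finite A" "card A = a" unfolding ksub_def by auto
      have "card (A - K) = 1" using card_Diff_subset[OF Kfin KA0] Am cardK_eq ka by simp
      then obtain y where y: "A - K = {y}" by (meson card_1_singletonE)
      then have "y \<in> Om - K" using Am by blast
      from surj[OF this] show "A \<in> F" using y KA0 by (metis Diff_partition insert_is_Un Un_commute)
    qed
  qed
qed

end

lemma flower_class:
  assumes "infinite Om" "1 \<le> k" "k < a" "k < b" "0 < l" "F \<subseteq> ksub Om a"
    and fl: "is_flower_in l (\<lambda>B A. k \<le> card (B \<inter> A)) (ksub Om b) F"
  shows "l = b - k \<and> (\<exists>S\<in>ksub Om (a - 1). F = {A\<in>ksub Om a. S \<subseteq> A})"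
proof -
  have inf: "infinite F" using fl unfolding is_flower_in_def by blast
  have "\<forall>A\<in>F. finite A \<and> card A = a" using assms(6) unfolding ksub_def by blast
  from weak_sunflower[OF this inf] obtain F' K where W: "F' \<subseteq> F" "infinite F'" "\<forall>A\<in>F'. K \<subseteq> A"
    "\<forall>y. y \<notin> K \<longrightarrow> finite {A\<in>F'. y \<in> A}" by blast
  interpret flw Om a b k l F F' K using assms W by unfold_locales auto
  show ?thesis using classify by blast
qed

lemma no_star:
  assumes Fs: "F \<subseteq> ksub Om a" and l0: "0 < l"
  shows "\<not> is_star_in l (\<lambda>B A. k \<le> card (B \<inter> A)) (ksub Om b) F"
proof
  assume st: "is_star_in l (\<lambda>B A. k \<le> card (B \<inter> A)) (ksub Om b) F"
  have inf: "infinite F" using st unfolding is_star_in_def by blast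
  have S3: "\<And>Y. Y \<subseteq> F \<Longrightarrow> finite Y \<Longrightarrow> card Y = l \<Longrightarrow>
     {B\<in>ksub Om b. (\<forall>A\<in>Y. \<not> k \<le> card (B \<inter> A)) \<and> (\<forall>A\<in>F - Y. k \<le> card (B \<inter> A))} \<noteq> {}"
    using st unfolding is_star_in_def by blast
  have "\<forall>A\<in>F. finite A \<and> card A = a" using Fs unfolding ksub_def by blast
  from weak_sunflower[OF this inf] obtain F' K where W: "F' \<subseteq> F" "infinite F'" "\<forall>A\<in>F'. K \<subseteq> A"
    "\<forall>y. y \<notin> K \<longrightarrow> finite {A\<in>F'. y \<in> A}" by blast
  obtain Y where Y: "finite Y" "card Y = l" "Y \<subseteq> F'" using infinite_arbitrarily_large[OF W(2)] by blast
  have "Y \<subseteq> F" using Y W(1) by blast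
  from S3[OF this Y(1) Y(2)] obtain B where B: "B \<in> ksub Om b" "\<forall>A\<in>Y. \<not> k \<le> card (B \<inter> A)"
    "\<forall>A\<in>F - Y. k \<le> card (B \<inter> A)" by blast
  have fB: "finite B" using B(1) unfolding ksub_def by blast
  have "Y \<noteq> {}" using Y(2) l0 by auto
  then obtain A1 where A1: "A1 \<in> Y" by blast
  have "B \<inter> K \<subseteq> B \<inter> A1" using W(3) A1 Y(3) by blast
  then have "card (B \<inter> K) \<le> card (B \<inter> A1)" using fB by (simp add: card_mono)
  moreover have "\<not> k \<le> card (B \<inter> A1)" using B(2) A1 by blast
  ultimately have cK: "card (B \<inter> K) < k" by simp
  have "{A\<in>F'. (A - K) \<inter> B \<noteq> {}} \<subseteq> (\<Union>y\<in>B-K. {A\<in>F'. y\<in>A})" by blast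
  moreover have "finite (\<Union>y\<in>B-K. {A\<in>F'. y\<in>A})"
    by (rule finite_UN_I) (use fB W(4) in auto)
  ultimately have bad: "finite {A\<in>F'. (A - K) \<inter> B \<noteq> {}}" using finite_subset by blast
  have "infinite (F' - Y)" using W(2) Y(1) by (rule Diff_infinite_finite[rotated])
  then have "infinite (F' - Y - {A\<in>F'. (A - K) \<inter> B \<noteq> {}})"
    using bad by (rule Diff_infinite_finite[rotated])
  then have "F' - Y - {A\<in>F'. (A - K) \<inter> B \<noteq> {}} \<noteq> {}" by (rule infinite_imp_nonempty)
  then obtain A where A: "A \<in> F'" "A \<notin> Y" "(A - K) \<inter> B = {}" by blast
  have "k \<le> card (B \<inter> A)" using B(3) A W(1) by blast
  moreover have "B \<inter> A \<subseteq> B \<inter> K" using A(3) by blast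
  then have "card (B \<inter> A) \<le> card (B \<inter> K)" using fB by (simp add: card_mono)
  ultimately show False using cK by simp
qed

lemma transfer_star:
  assumes g: "inj g" and h: "inj h"
  shows "is_star_in l adj (h ` Q) (g ` F) = is_star_in l (\<lambda>v a. adj (h v) (g a)) Q F"
proof -
  have e1: "{a \<in> g ` F. adj (h q) a} = g ` {a\<in>F. adj (h q) (g a)}" for q by auto
  have e1b: "{a \<in> g ` F. \<not> adj (h q) a} = g ` {a\<in>F. \<not> adj (h q) (g a)}" for q by auto
  have fc: "finite (g ` S) = finite S" "card (g ` S) = card S" for S
    using g by (auto simp: finite_image_iff card_image inj_on_subset)
  have coll: "{v \<in> h ` Q. P v} = h ` {q\<in>Q. P (h q)}" for P by auto
  have dif: "g ` F - g ` A = g ` (F - A)" for A using g by (simp add: image_set_diff)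
  have fh: "finite (h ` S) = finite S" for S
    using h by (auto simp: finite_image_iff inj_on_subset)
  have sub: "(\<forall>A. A \<subseteq> g ` F \<and> finite A \<and> card A = n \<longrightarrow> P A) =
             (\<forall>A. A \<subseteq> F \<and> finite A \<and> card A = n \<longrightarrow> P (g ` A))" for P n
  proof
    assume H: "\<forall>A. A \<subseteq> g ` F \<and> finite A \<and> card A = n \<longrightarrow> P A"
    show "\<forall>A. A \<subseteq> F \<and> finite A \<and> card A = n \<longrightarrow> P (g ` A)"
      using H fc by (metis image_mono)
  next
    assume H: "\<forall>A. A \<subseteq> F \<and> finite A \<and> card A = n \<longrightarrow> P (g ` A)"
    show "\<forall>A. A \<subseteq> g ` F \<and> finite A \<and> card A = n \<longrightarrow> P A"
      using H fc by (metis subset_image_iff)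
  qed
  have imgall: "(\<forall>x. x \<in> g ` F \<longrightarrow> P x) \<longleftrightarrow> (\<forall>x. x \<in> F \<longrightarrow> P (g x))" for P by auto
  show ?thesis
    unfolding is_star_in_def sub dif coll
    by (simp add: e1 e1b fc fh imgall)
qed

lemma card_ins_int:
  assumes "y \<notin> S" "finite B"
  shows "card (B \<inter> insert y S) = card (B \<inter> S) + (if y \<in> B then 1 else 0)"
proof (cases "y \<in> B")
  case True
  then have "B \<inter> insert y S = insert y (B \<inter> S)" by blast
  then show ?thesis using True assms by simp
next
  case False
  then have "B \<inter> insert y S = B \<inter> S" by blast
  then show ?thesis using False by simp
qed

lemma reg_flower:
  assumes infO: "infinite Om" and k1: "1 \<le> k" and ka: "k < a" and kb: "k < b"
    and S: "S \<in> ksub Om (a - 1)"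
  shows "is_flower_in (b - k) (\<lambda>B A. k \<le> card (B \<inter> A)) (ksub Om b) {A\<in>ksub Om a. S \<subseteq> A}"
proof -
  define F where "F = {A\<in>ksub Om a. S \<subseteq> A}"
  have SOm: "S \<subseteq> Om" and fS: "finite S" and cS: "card S = a - 1" using S unfolding ksub_def by auto
  have Fimg: "F = (\<lambda>y. insert y S) ` (Om - S)"
  proof
    show "F \<subseteq> (\<lambda>y. insert y S) ` (Om - S)"
    proof
      fix A assume "A \<in> F"
      then have A: "A \<subseteq> Om" "finite A" "card A = a" "S \<subseteq> A" unfolding F_def ksub_def by auto
      have "card (A - S) = 1" using card_Diff_subset[OF fS A(4)] A(3) cS ka by simp
      then obtain y where y: "A - S = {y}" by (meson card_1_singletonE)
      then have "A = insert y S" using A(4) by blast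
      moreover have "y \<in> Om - S" using y A(1) by blast
      ultimately show "A \<in> (\<lambda>y. insert y S) ` (Om - S)" by blast
    qed
    show "(\<lambda>y. insert y S) ` (Om - S) \<subseteq> F"
    proof
      fix A assume "A \<in> (\<lambda>y. insert y S) ` (Om - S)"
      then obtain y where y: "y \<in> Om - S" "A = insert y S" by blast
      then have "card A = a" using fS cS ka by simp
      then show "A \<in> F" using y SOm fS unfolding F_def ksub_def by auto
    qed
  qed
  have inj: "inj_on (\<lambda>y. insert y S) (Om - S)"
    unfolding inj_on_def by (metis Diff_iff insert_Diff_if singletonI insert_iff)
  have infOS: "infinite (Om - S)" using infO fS by (simp add: Diff_infinite_finite)
  have infF: "infinite F" unfolding Fimg using inj infOS finite_image_iff by blast
  have adjI: "k \<le> card (B \<inter> insert y S) \<longleftrightarrow> k \<le> card (B \<inter> S) + (if y \<in> B then 1 else 0)"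
    if "y \<notin> S" "finite B" for y B using card_ins_int[OF that] by simp
  have F1: "(finite {A\<in>F. k \<le> card (B \<inter> A)} \<and> card {A\<in>F. k \<le> card (B \<inter> A)} = b - k + 1)
     \<or> (\<forall>A\<in>F. k \<le> card (B \<inter> A)) \<or> {A\<in>F. k \<le> card (B \<inter> A)} = {}" if B: "B \<in> ksub Om b" for B
  proof -
    have fB: "finite B" and BOm: "B \<subseteq> Om" and cB: "card B = b" using B unfolding ksub_def by auto
    consider "k \<le> card (B \<inter> S)" | "card (B \<inter> S) + 1 < k" | "card (B \<inter> S) = k - 1" by linarith
    then show ?thesis
    proof cases
      case 1
      then have "\<forall>A\<in>F. k \<le> card (B \<inter> A)" unfolding Fimg using adjI fB by auto
      then show ?thesis by blast
    next
      case 2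
      then have "{A\<in>F. k \<le> card (B \<inter> A)} = {}" unfolding Fimg using adjI fB by (auto split: if_splits)
      then show ?thesis by blast
    next
      case 3
      have "{A\<in>F. k \<le> card (B \<inter> A)} = (\<lambda>y. insert y S) ` (B - S)"
      proof
        show "{A\<in>F. k \<le> card (B \<inter> A)} \<subseteq> (\<lambda>y. insert y S) ` (B - S)"
        proof
          fix A assume "A \<in> {A\<in>F. k \<le> card (B \<inter> A)}"
          then obtain y where y: "y \<in> Om - S" "A = insert y S" "k \<le> card (B \<inter> insert y S)"
            unfolding Fimg by blast
          then have "y \<in> B" using adjI[of y B] fB 3 k1 by (auto split: if_splits)
          then show "A \<in> (\<lambda>y. insert y S) ` (B - S)" using y by blast
        qed
        show "(\<lambda>y. insert y S) ` (B - S) \<subseteq> {A\<in>F. k \<le> card (B \<inter> A)}"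
        proof
          fix A assume "A \<in> (\<lambda>y. insert y S) ` (B - S)"
          then obtain y where y: "y \<in> B - S" "A = insert y S" by blast
          then have "y \<in> Om - S" using BOm by blast
          then have "A \<in> F" unfolding Fimg using y by blast
          moreover have "k \<le> card (B \<inter> A)" using adjI[of y B] y fB 3 k1 by simp
          ultimately show "A \<in> {A\<in>F. k \<le> card (B \<inter> A)}" by blast
        qed
      qed
      moreover have "inj_on (\<lambda>y. insert y S) (B - S)" using BOm by (intro inj_on_subset[OF inj]) blast
      moreover have "card (B - S) = b - k + 1"
      proof -
        have "card B = card (B \<inter> S) + card (B - S)" using fB
          by (metis card_Int_Diff)
        then show ?thesis using 3 cB k1 kb by simp
      qed
      ultimately show ?thesis using fB by (simp add: card_image)
    qed
  qed
  have F2: "finite {B\<in>ksub Om b. (\<forall>A\<in>X. k \<le> card (B \<inter> A)) \<and> (\<forall>A\<in>F-X. \<not> k \<le> card (B \<inter> A))} \<and>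
        {B\<in>ksub Om b. (\<forall>A\<in>X. k \<le> card (B \<inter> A)) \<and> (\<forall>A\<in>F-X. \<not> k \<le> card (B \<inter> A))} \<noteq> {}"
    if X: "X \<subseteq> F" "finite X" "card X = b - k + 1" for X
  proof -
    define Y where "Y = {y\<in>Om - S. insert y S \<in> X}"
    have XY: "X = (\<lambda>y. insert y S) ` Y" using X(1) unfolding Y_def Fimg by blast
    have injY: "inj_on (\<lambda>y. insert y S) Y" by (intro inj_on_subset[OF inj]) (auto simp: Y_def)
    have fY: "finite Y" using X(2) XY injY finite_image_iff by blast
    have cY: "card Y = b - k + 1" using X(3) XY injY card_image by metis
    have YOm: "Y \<subseteq> Om - S" unfolding Y_def by blast
    define T where "T = {B\<in>ksub Om b. (\<forall>A\<in>X. k \<le> card (B \<inter> A)) \<and> (\<forall>A\<in>F-X. \<not> k \<le> card (B \<inter> A))}"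
    have "T \<subseteq> Pow (S \<union> Y)"
    proof
      fix B assume "B \<in> T"
      then have B: "B \<in> ksub Om b" "\<forall>A\<in>X. k \<le> card (B \<inter> A)" "\<forall>A\<in>F-X. \<not> k \<le> card (B \<inter> A)"
        unfolding T_def by auto
      have fB: "finite B" and BOm: "B \<subseteq> Om" using B(1) unfolding ksub_def by auto
      have "Y \<noteq> {}" using cY by auto
      then obtain y where y: "y \<in> Y" by blast
      have "k \<le> card (B \<inter> insert y S)" using B(2) XY y by blast
      then have kS: "k \<le> card (B \<inter> S) + 1" using adjI[of y B] y YOm fB by (auto split: if_splits)
      show "B \<in> Pow (S \<union> Y)"
      proof (rule ccontr)
        assume "B \<notin> Pow (S \<union> Y)"
        then obtain x where x: "x \<in> B" "x \<notin> S" "x \<notin> Y" by blast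
        then have xO: "x \<in> Om - S" using BOm by blast
        then have "insert x S \<in> F" unfolding Fimg by blast
        moreover have "insert x S \<notin> X" using x xO unfolding Y_def by blast
        ultimately have "\<not> k \<le> card (B \<inter> insert x S)" using B(3) by blast
        then show False using adjI[of x B] x fB kS by simp
      qed
    qed
    moreover have "finite (Pow (S \<union> Y))" using fS fY by simp
    ultimately have fT: "finite T" using finite_subset by blast
    have "k - 1 \<le> card S" using cS ka by simp
    then obtain T0 where T0: "T0 \<subseteq> S" "card T0 = k - 1" "finite T0" by (meson obtain_subset_with_card_n)
    define B where "B = T0 \<union> Y"
    have dj: "T0 \<inter> Y = {}" using T0 YOm by blast
    have "card B = b" unfolding B_def using card_Un_disjoint[OF T0(3) fY dj] T0 cY k1 kb by simp
    moreover have "B \<subseteq> Om" using T0 SOm YOm unfolding B_def by blast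
    moreover have fB: "finite B" using T0 fY unfolding B_def by blast
    ultimately have Bk: "B \<in> ksub Om b" unfolding ksub_def by blast
    have BS: "B \<inter> S = T0" using T0 YOm unfolding B_def by blast
    have "B \<in> T"
    proof -
      have "\<forall>A\<in>X. k \<le> card (B \<inter> A)"
      proof
        fix A assume "A \<in> X"
        then obtain y where y: "y \<in> Y" "A = insert y S" using XY by blast
        then show "k \<le> card (B \<inter> A)" using adjI[of y B] YOm fB BS T0 k1 unfolding B_def by auto
      qed
      moreover have "\<forall>A\<in>F-X. \<not> k \<le> card (B \<inter> A)"
      proof
        fix A assume A: "A \<in> F - X"
        then obtain x where x: "x \<in> Om - S" "A = insert x S" unfolding Fimg by blast
        then have "x \<notin> Y" using A XY by blast
        then have "x \<notin> B" using x T0 unfolding B_def by blast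
        then show "\<not> k \<le> card (B \<inter> A)" using adjI[of x B] x fB BS T0 k1 by auto
      qed
      ultimately show ?thesis using Bk unfolding T_def by blast
    qed
    then show ?thesis using fT unfolding T_def by blast
  qed
  have F3: "infinite {B\<in>ksub Om b. \<forall>A\<in>F. k \<le> card (B \<inter> A)}"
  proof -
    have "k \<le> card S" using cS ka by simp
    then obtain T1 where T1: "T1 \<subseteq> S" "card T1 = k" "finite T1" by (meson obtain_subset_with_card_n)
    obtain R0 where R0: "finite R0" "card R0 = b - k - 1" "R0 \<subseteq> Om - S"
      using infinite_arbitrarily_large[OF infOS] by blast
    define f where "f x = T1 \<union> insert x R0" for x
    have infD: "infinite (Om - S - R0)" using infOS R0(1) by (simp add: Diff_infinite_finite)
    have "inj_on f (Om - S - R0)"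
    proof (rule inj_onI)
      fix x y assume xy: "x \<in> Om - S - R0" "y \<in> Om - S - R0" "f x = f y"
      then have "x \<in> f y" unfolding f_def by blast
      then show "x = y" using xy T1(1) unfolding f_def by blast
    qed
    then have inf2: "infinite (f ` (Om - S - R0))" using infD finite_image_iff by blast
    have "f ` (Om - S - R0) \<subseteq> {B\<in>ksub Om b. \<forall>A\<in>F. k \<le> card (B \<inter> A)}"
    proof
      fix B assume "B \<in> f ` (Om - S - R0)"
      then obtain x where x: "x \<in> Om - S - R0" "B = f x" by blast
      have dj: "T1 \<inter> insert x R0 = {}" using T1(1) R0(3) x(1) by blast
      have "card (insert x R0) = b - k" using R0 x(1) kb by simp
      then have "card B = b" using card_Un_disjoint[OF T1(3) _ dj] R0(1) T1(2) kb unfolding x(2) f_def by simp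
      moreover have "B \<subseteq> Om" using T1 SOm R0(3) x(1) unfolding x(2) f_def by blast
      moreover have fB: "finite B" using T1 R0 unfolding x(2) f_def by blast
      moreover have "\<forall>A\<in>F. k \<le> card (B \<inter> A)"
      proof
        fix A assume "A \<in> F"
        then have "S \<subseteq> A" unfolding F_def by blast
        then have "T1 \<subseteq> B \<inter> A" using T1(1) unfolding x(2) f_def by blast
        then show "k \<le> card (B \<inter> A)" using T1(2) fB le_card_mono[of k T1 "B \<inter> A"] by simp
      qed
      ultimately show "B \<in> {B\<in>ksub Om b. \<forall>A\<in>F. k \<le> card (B \<inter> A)}" unfolding ksub_def by blast
    qed
    then show ?thesis using inf2 finite_subset by blast
  qed
  show ?thesis unfolding is_flower_in_def F_def[symmetric]
    using infF F1 F2 F3 by (simp only: Suc_eq_plus1[symmetric]) blast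
qed


lemma bip_i: "bipart_i Om i = Pair False ` ksub Om i" unfolding bipart_i_def by auto
lemma bip_j: "bipart_j Om j = Pair True ` ksub Om j" unfolding bipart_j_def by auto

lemma gadj_TF: "(\<lambda>v a. gadj k (Pair True v) (Pair False a)) = (\<lambda>B A. k \<le> card (B \<inter> A))"
  by (simp add: gadj_def fun_eq_iff)
lemma gadj_FT: "(\<lambda>v a. gadj k (Pair False v) (Pair True a)) = (\<lambda>B A. k \<le> card (B \<inter> A))"
  by (simp add: gadj_def fun_eq_iff)

lemma tagged_eq: "\<A> \<subseteq> Pair c ` X \<Longrightarrow> \<A> = Pair c ` (snd ` \<A>) \<and> snd ` \<A> \<subseteq> X"
  by force

lemma injP: "inj (Pair c)" by (simp add: inj_def)

lemma reg_eq: "{(c, A) | A. A \<in> ksub Om n \<and> S \<subseteq> A} = Pair c ` {A\<in>ksub Om n. S \<subseteq> A}"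
  by auto

theorem proposition4p6:
  fixes \<Omega> :: "'a set" and i j k :: nat
  assumes "infinite \<Omega>" and "1 \<le> k" and "k < i" and "i \<le> j"
  shows "(\<forall>l>0. \<forall>\<A>. gamma_flower \<Omega> i j k l \<A> \<longrightarrow>
            (j_regular_star \<Omega> j \<A> \<and> l = i - k) \<or> (i_regular_star \<Omega> i \<A> \<and> l = j - k))
       \<and> (\<forall>\<A>. j_regular_star \<Omega> j \<A> \<longrightarrow> gamma_flower \<Omega> i j k (i - k) \<A>)
       \<and> (\<forall>\<A>. i_regular_star \<Omega> i \<A> \<longrightarrow> gamma_flower \<Omega> i j k (j - k) \<A>)
       \<and> (\<forall>l>0. \<forall>\<A>. \<not> gamma_star \<Omega> i j k l \<A>)"
proof (intro conjI allI impI)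
  have kj: "k < j" using assms by simp
  fix l :: nat and \<A> :: "(bool \<times> 'a set) set"
  assume l0: "0 < l" and gf: "gamma_flower \<Omega> i j k l \<A>"
  show "(j_regular_star \<Omega> j \<A> \<and> l = i - k) \<or> (i_regular_star \<Omega> i \<A> \<and> l = j - k)"
  proof (cases "\<A> \<subseteq> bipart_i \<Omega> i \<and> is_flower_in l (gadj k) (bipart_j \<Omega> j) \<A>")
    case True
    define F where "F = snd ` \<A>"
    have T1: "\<A> \<subseteq> Pair False ` ksub \<Omega> i" using True unfolding bip_i by (rule conjunct1)
    have AF: "\<A> = Pair False ` F" "F \<subseteq> ksub \<Omega> i" using tagged_eq[OF T1] unfolding F_def by auto
    have "is_flower_in l (gadj k) (bipart_j \<Omega> j) \<A>" using True by (rule conjunct2)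
    then have "is_flower_in l (gadj k) (Pair True ` ksub \<Omega> j) (Pair False ` F)" unfolding bip_j AF(1)[symmetric] .
    then have "is_flower_in l (\<lambda>B A. k \<le> card (B \<inter> A)) (ksub \<Omega> j) F"
      unfolding transfer_flower[OF injP injP] gadj_TF .
    from flower_class[OF assms(1,2,3) kj l0 AF(2) this] obtain S where
      S: "l = j - k" "S \<in> ksub \<Omega> (i - 1)" "F = {A\<in>ksub \<Omega> i. S \<subseteq> A}" by blast
    have "i_regular_star \<Omega> i \<A>" unfolding i_regular_star_def reg_eq
      using S(2) by (intro bexI[of _ S]) (simp only: AF(1) S(3))
    then show ?thesis using S(1) by (intro disjI2 conjI)
  next
    case False
    then have F: "\<A> \<subseteq> bipart_j \<Omega> j \<and> is_flower_in l (gadj k) (bipart_i \<Omega> i) \<A>"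
      using gf unfolding gamma_flower_def by blast
    define F where "F = snd ` \<A>"
    have T1: "\<A> \<subseteq> Pair True ` ksub \<Omega> j" using F unfolding bip_j by (rule conjunct1)
    have AF: "\<A> = Pair True ` F" "F \<subseteq> ksub \<Omega> j" using tagged_eq[OF T1] unfolding F_def by auto
    have "is_flower_in l (gadj k) (bipart_i \<Omega> i) \<A>" using F by (rule conjunct2)
    then have "is_flower_in l (gadj k) (Pair False ` ksub \<Omega> i) (Pair True ` F)" unfolding bip_i AF(1)[symmetric] .
    then have "is_flower_in l (\<lambda>B A. k \<le> card (B \<inter> A)) (ksub \<Omega> i) F"
      unfolding transfer_flower[OF injP injP] gadj_FT .
    from flower_class[OF assms(1,2) kj assms(3) l0 AF(2) this] obtain S where
      S: "l = i - k" "S \<in> ksub \<Omega> (j - 1)" "F = {A\<in>ksub \<Omega> j. S \<subseteq> A}" by blast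
    have "j_regular_star \<Omega> j \<A>" unfolding j_regular_star_def reg_eq
      using S(2) by (intro bexI[of _ S]) (simp only: AF(1) S(3))
    then show ?thesis using S(1) by (intro disjI1 conjI)
  qed
next
  have kj: "k < j" using assms by simp
  fix \<A> :: "(bool \<times> 'a set) set"
  assume "j_regular_star \<Omega> j \<A>"
  then obtain S where S: "S \<in> ksub \<Omega> (j - 1)" "\<A> = Pair True ` {A\<in>ksub \<Omega> j. S \<subseteq> A}"
    unfolding j_regular_star_def reg_eq by blast
  have "is_flower_in (i - k) (\<lambda>B A. k \<le> card (B \<inter> A)) (ksub \<Omega> i) {A\<in>ksub \<Omega> j. S \<subseteq> A}"
    using reg_flower[OF assms(1,2) kj assms(3) S(1)] .
  then have "is_flower_in (i - k) (gadj k) (Pair False ` ksub \<Omega> i) \<A>"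
    unfolding S(2) transfer_flower[OF injP injP] gadj_FT .
  moreover have "\<A> \<subseteq> bipart_j \<Omega> j" unfolding S(2) bip_j by blast
  ultimately show "gamma_flower \<Omega> i j k (i - k) \<A>" unfolding gamma_flower_def bip_i by blast
next
  have kj: "k < j" using assms by simp
  fix \<A> :: "(bool \<times> 'a set) set"
  assume "i_regular_star \<Omega> i \<A>"
  then obtain S where S: "S \<in> ksub \<Omega> (i - 1)" "\<A> = Pair False ` {A\<in>ksub \<Omega> i. S \<subseteq> A}"
    unfolding i_regular_star_def reg_eq by blast
  have "is_flower_in (j - k) (\<lambda>B A. k \<le> card (B \<inter> A)) (ksub \<Omega> j) {A\<in>ksub \<Omega> i. S \<subseteq> A}"
    using reg_flower[OF assms(1,2,3) kj S(1)] .
  then have "is_flower_in (j - k) (gadj k) (Pair True ` ksub \<Omega> j) \<A>"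
    unfolding S(2) transfer_flower[OF injP injP] gadj_TF .
  moreover have "\<A> \<subseteq> bipart_i \<Omega> i" unfolding S(2) bip_i by blast
  ultimately show "gamma_flower \<Omega> i j k (j - k) \<A>" unfolding gamma_flower_def bip_j by blast
next
  fix l :: nat and \<A> :: "(bool \<times> 'a set) set"
  assume l0: "0 < l"
  show "\<not> gamma_star \<Omega> i j k l \<A>"
  proof
    assume gs: "gamma_star \<Omega> i j k l \<A>"
    show False
    proof (cases "\<A> \<subseteq> bipart_i \<Omega> i \<and> is_star_in l (gadj k) (bipart_j \<Omega> j) \<A>")
      case True
      define F where "F = snd ` \<A>"
      have T1: "\<A> \<subseteq> Pair False ` ksub \<Omega> i" using True unfolding bip_i by (rule conjunct1)
      have AF: "\<A> = Pair False ` F" "F \<subseteq> ksub \<Omega> i" using tagged_eq[OF T1] unfolding F_def by auto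
      have "is_star_in l (gadj k) (bipart_j \<Omega> j) \<A>" using True by (rule conjunct2)
      then have "is_star_in l (gadj k) (Pair True ` ksub \<Omega> j) (Pair False ` F)" unfolding bip_j AF(1)[symmetric] .
      then have "is_star_in l (\<lambda>B A. k \<le> card (B \<inter> A)) (ksub \<Omega> j) F"
        unfolding transfer_star[OF injP injP] gadj_TF .
      then show False using no_star[OF AF(2) l0] by blast
    next
      case False
      then have F: "\<A> \<subseteq> bipart_j \<Omega> j \<and> is_star_in l (gadj k) (bipart_i \<Omega> i) \<A>"
        using gs unfolding gamma_star_def by blast
      define F where "F = snd ` \<A>"
      have T1: "\<A> \<subseteq> Pair True ` ksub \<Omega> j" using F unfolding bip_j by (rule conjunct1)
      have AF: "\<A> = Pair True ` F" "F \<subseteq> ksub \<Omega> j" using tagged_eq[OF T1] unfolding F_def by auto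
      have "is_star_in l (gadj k) (bipart_i \<Omega> i) \<A>" using F by (rule conjunct2)
      then have "is_star_in l (gadj k) (Pair False ` ksub \<Omega> i) (Pair True ` F)" unfolding bip_i AF(1)[symmetric] .
      then have "is_star_in l (\<lambda>B A. k \<le> card (B \<inter> A)) (ksub \<Omega> i) F"
        unfolding transfer_star[OF injP injP] gadj_FT .
      then show False using no_star[OF AF(2) l0] by blast
    qed
  qed
qed

end
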